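(* Let $X\subseteq\mathbb{N}$ be finite, $\omega^{n+3}$-large and exp-sparse, and let $d\in\mathbb{N}$ with $d\le\min X$. Then $X$ admits an $(\omega^n,d)$-grouping: for every colouring $P:[X]^2\to2$ there is an $(\omega^n,d)$-grouping for $P$.
   Context: Ordinals below $\omega^\omega$ are in Cantor normal form; a natural number $d$ is the ordinal $\omega^0\cdot d$; $\omega^j\cdot m$ = sum of $m$ copies of $\omega^j$. For $m\in\mathbb{N}$: $0[m]=0$, $(\beta+1)[m]=\beta$, $(\beta+\omega^{n})[m]=\beta+\omega^{n-1}\cdot m$ for $n\ge1$. A finite $X=\{x_0<\dots<x_{\ell-1}\}\subseteq\mathbb{N}$ is $\alpha$-large if $\alpha[x_0]\cdots[x_{\ell-1}]=0$ (so $d$-large means having at least $d$ elements). A set $X$ with $\min X\ge3$ is exp-sparse if $x<y$ in $X$ implies $4^x<y$. For $P:[X]^2\to2$, a finite sequence $\langle F_i\subseteq X:i<\ell\rangle$ of finite sets is an $(\alpha,\beta)$-grouping for $P$ if: (1) $\max F_i<\min F_j$ for $i<j<\ell$; (2) each $F_i$ is $\alpha$-large; (3) $\{\max F_i:i<\ell\}$ is $\beta$-large; (4) for all $i<j<\ell$, $x,x'\in F_i$, $y,y'\in F_j$: $P(x,y)=P(x',y')$. *)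

theory Defs
  imports Main
begin

text \<open>Ordinals below omega^omega in Cantor normal form: the list [e1,...,ek] with
  e1 \<ge> ... \<ge> ek denotes omega^e1 + ... + omega^ek; [] denotes 0.\<close>

type_synonym ord_cnf = "nat list"

definition cnf_wf :: "ord_cnf \<Rightarrow> bool" where
  "cnf_wf \<alpha> \<longleftrightarrow> sorted_wrt (\<ge>) \<alpha>"

definition omega_pow :: "nat \<Rightarrow> ord_cnf" where
  "omega_pow n = [n]"

definition ord_of_nat :: "nat \<Rightarrow> ord_cnf" where
  "ord_of_nat d = replicate d 0"

text \<open>Fundamental sequence: 0[m]=0, (b+1)[m]=b, (b+omega^n)[m] = b + omega^(n-1)*m for n \<ge> 1.\<close>
definition fund :: "ord_cnf \<Rightarrow> nat \<Rightarrow> ord_cnf" where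
  "fund \<alpha> m = (if \<alpha> = [] then []
     else if last \<alpha> = 0 then butlast \<alpha>
     else butlast \<alpha> @ replicate m (last \<alpha> - 1))"

definition large :: "ord_cnf \<Rightarrow> nat set \<Rightarrow> bool" where
  "large \<alpha> X \<longleftrightarrow> finite X \<and> foldl fund \<alpha> (sorted_list_of_set X) = []"

definition exp_sparse :: "nat set \<Rightarrow> bool" where
  "exp_sparse X \<longleftrightarrow> (\<forall>x\<in>X. 3 \<le> x) \<and> (\<forall>x\<in>X. \<forall>y\<in>X. x < y \<longrightarrow> 4 ^ x < y)"

text \<open>(alpha,beta)-grouping for the colouring P (only values P x y with x < y matter).\<close>
definition grouping :: "ord_cnf \<Rightarrow> ord_cnf \<Rightarrow> nat set \<Rightarrow> (nat \<Rightarrow> nat \<Rightarrow> bool) \<Rightarrow> nat set list \<Rightarrow> bool" where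
  "grouping \<alpha> \<beta> X P F \<longleftrightarrow>
     (\<forall>i<length F. F ! i \<subseteq> X \<and> finite (F ! i)) \<and>
     (\<forall>i j. i < j \<and> j < length F \<longrightarrow> Max (F ! i) < Min (F ! j)) \<and>
     (\<forall>i<length F. large \<alpha> (F ! i)) \<and>
     large \<beta> {Max (F ! i) | i. i < length F} \<and>
     (\<forall>i j. i < j \<and> j < length F \<longrightarrow>
        (\<forall>x\<in>F ! i. \<forall>x'\<in>F ! i. \<forall>y\<in>F ! j. \<forall>y'\<in>F ! j. P x y = P x' y'))"

end

theory Submission imports Defs begin

lemma sl_set: "sorted_wrt (<) xs \<Longrightarrow> sorted_list_of_set (set xs) = (xs::nat list)"
  by (metis sorted_list_of_set.finite_set_strict_sorted sorted_list_of_set.strict_sorted_key_list_of_set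
        sorted_list_of_set.set_sorted_key_list_of_set finite_set strict_sorted_equal)

lemma fund_nil[simp]: "fund [] m = []" by (simp add: fund_def)
lemma foldl_fund_nil[simp]: "foldl fund [] xs = []" by (induction xs) auto
lemma fund_append: "\<gamma> \<noteq> [] \<Longrightarrow> fund (\<beta> @ \<gamma>) m = \<beta> @ fund \<gamma> m"
  by (simp add: fund_def butlast_append)

lemma split_ex: "foldl fund (\<beta> @ \<gamma>) xs = [] \<Longrightarrow>
   \<exists>ys zs. xs = ys @ zs \<and> foldl fund \<gamma> ys = [] \<and> foldl fund \<beta> zs = []"
proof (induction xs arbitrary: \<gamma>)
  case Nil then show ?case by simp
next
  case (Cons x xs)
  show ?case
  proof (cases "\<gamma> = []")
    case True then show ?thesis using Cons.prems by (intro exI[of _ "[]"] exI[of _ "x#xs"]) auto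
  next
    case False
    then have "foldl fund (\<beta> @ fund \<gamma> x) xs = []" using Cons.prems by (simp add: fund_append)
    from Cons.IH[OF this] obtain ys zs where "xs = ys @ zs" "foldl fund (fund \<gamma> x) ys = []" "foldl fund \<beta> zs = []"
      by blast
    then show ?thesis by (intro exI[of _ "x # ys"] exI[of _ zs]) auto
  qed
qed

lemma split_in_aux: "foldl fund \<gamma> ys = [] \<Longrightarrow>
   \<exists>ys1 ys2. ys = ys1 @ ys2 \<and> foldl fund (\<beta> @ \<gamma>) ys1 = \<beta>"
proof (induction ys arbitrary: \<gamma>)
  case Nil then show ?case by simp
next
  case (Cons x xs)
  show ?case
  proof (cases "\<gamma> = []")
    case True then show ?thesis by (intro exI[of _ "[]"] exI[of _ "x#xs"]) auto
  next
    case False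
    then have "foldl fund (fund \<gamma> x) xs = []" using Cons.prems by simp
    from Cons.IH[OF this] obtain ys1 ys2 where "xs = ys1 @ ys2" "foldl fund (\<beta> @ fund \<gamma> x) ys1 = \<beta>"
      by blast
    then show ?thesis using False by (intro exI[of _ "x # ys1"] exI[of _ ys2]) (auto simp: fund_append)
  qed
qed

lemma fund_prefix: "b \<le> a \<Longrightarrow> \<exists>\<delta>. fund \<alpha> a = fund \<alpha> b @ \<delta>"
proof -
  assume "b \<le> a"
  then obtain n where "a = b + n" using le_Suc_ex by blast
  then show ?thesis unfolding fund_def
    by (auto simp: replicate_add intro: exI[of _ "replicate n (last \<alpha> - 1)"])
qed

lemma large_fin: "large \<alpha> A \<Longrightarrow> finite A" by (simp add: large_def)

lemma large_nil_ord[simp]: "large [] A \<longleftrightarrow> finite A" by (simp add: large_def)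

lemma large_empty[simp]: "large \<alpha> {} \<longleftrightarrow> \<alpha> = []" by (simp add: large_def)

lemma sl_insert: "finite (A::nat set) \<Longrightarrow> \<forall>y\<in>A. x < y \<Longrightarrow> sorted_list_of_set (insert x A) = x # sorted_list_of_set A"
proof -
  assume a: "finite A" "\<forall>y\<in>A. x < y"
  have "sorted_wrt (<) (x # sorted_list_of_set A)"
    using a by (simp add: sorted_list_of_set.strict_sorted_key_list_of_set)
  from sl_set[OF this] show ?thesis using a by simp
qed

lemma large_insert: "finite (A::nat set) \<Longrightarrow> \<forall>y\<in>A. x < y \<Longrightarrow> large \<alpha> (insert x A) \<longleftrightarrow> large (fund \<alpha> x) A"
  unfolding large_def by (subst sl_insert) auto

lemma large_Min: "finite (A::nat set) \<Longrightarrow> A \<noteq> {} \<Longrightarrow> large \<alpha> A \<longleftrightarrow> large (fund \<alpha> (Min A)) (A - {Min A})"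
proof -
  assume a: "finite A" "A \<noteq> {}"
  have "A = insert (Min A) (A - {Min A})" using a Min_in by blast
  moreover have "\<forall>y\<in>A - {Min A}. Min A < y" using a by (simp add: order_le_neq_trans)
  ultimately show ?thesis using large_insert[of "A - {Min A}" "Min A" \<alpha>] a by (metis finite_Diff)
qed

lemma sl_append: "sorted_list_of_set (S::nat set) = ys @ zs \<Longrightarrow> finite S \<Longrightarrow>
  sorted_list_of_set (set ys) = ys \<and> sorted_list_of_set (set zs) = zs \<and> S = set ys \<union> set zs
  \<and> (\<forall>x\<in>set ys. \<forall>y\<in>set zs. x < y)"
proof -
  assume a: "sorted_list_of_set S = ys @ zs" "finite S"
  have s: "sorted_wrt (<) (ys @ zs)" using a
    by (metis sorted_list_of_set.strict_sorted_key_list_of_set)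
  then have "sorted_wrt (<) ys" "sorted_wrt (<) zs" "\<forall>x\<in>set ys. \<forall>y\<in>set zs. x < y"
    by (auto simp: sorted_wrt_append)
  moreover have "S = set ys \<union> set zs" using a
    by (metis set_append sorted_list_of_set.set_sorted_key_list_of_set)
  ultimately show ?thesis using sl_set by auto
qed

lemma large_split_ex: "large (\<beta> @ \<gamma>) S \<Longrightarrow>
  \<exists>A B. S = A \<union> B \<and> (\<forall>x\<in>A. \<forall>y\<in>B. x < y) \<and> large \<gamma> A \<and> large \<beta> B"
proof -
  assume a: "large (\<beta> @ \<gamma>) S"
  then have f: "finite S" by (simp add: large_def)
  from a obtain ys zs where yz: "sorted_list_of_set S = ys @ zs" "foldl fund \<gamma> ys = []" "foldl fund \<beta> zs = []"
    using split_ex unfolding large_def by blast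
  from sl_append[OF yz(1) f] yz show ?thesis
    by (intro exI[of _ "set ys"] exI[of _ "set zs"]) (auto simp: large_def)
qed

lemma large_mono: "finite B \<Longrightarrow> A \<subseteq> B \<Longrightarrow> large \<alpha> A \<Longrightarrow> large \<alpha> B"
proof (induction "card B" arbitrary: B A \<alpha> rule: less_induct)
  case less
  show ?case
  proof (cases "B = {}")
    case True then show ?thesis using less.prems by auto
  next
    case False
    define b where "b = Min B"
    have bB: "b \<in> B" using False less.prems b_def by simp
    have LB: "large \<alpha> B \<longleftrightarrow> large (fund \<alpha> b) (B - {b})"
      using large_Min[OF less.prems(1) False] b_def by simp
    have cB: "card (B - {b}) < card B" using bB less.prems(1) by (meson card_Diff1_less)
    have fB: "finite (B - {b})" using less.prems(1) by simp
    show ?thesis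
    proof (cases "\<alpha> = []")
      case True then show ?thesis using less.prems by simp
    next
      case an: False
      then have Ane: "A \<noteq> {}" using less.prems(3) by auto
      have fA: "finite A" using less.prems by (meson finite_subset)
      show ?thesis
      proof (cases "b \<in> A")
        case True
        have "Min A = b"
          using True less.prems(1,2) fA b_def by (meson Min_in Min_le Ane antisym subsetD)
        then have "large (fund \<alpha> b) (A - {b})" using large_Min[OF fA Ane] less.prems(3) by simp
        moreover have "A - {b} \<subseteq> B - {b}" using less.prems(2) by blast
        ultimately show ?thesis using less.hyps[OF cB fB] LB by blast
      next
        case False
        define a where "a = Min A"
        have aA: "a \<in> A" using Ane fA a_def by simp
        have "b \<le> a" using aA less.prems(1,2) b_def by auto
        then obtain \<delta> where d: "fund \<alpha> a = fund \<alpha> b @ \<delta>" using fund_prefix by blast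
        have "large (fund \<alpha> a) (A - {a})" using large_Min[OF fA Ane] less.prems(3) a_def by simp
        then obtain A1 A2 where "A - {a} = A1 \<union> A2" "large (fund \<alpha> b) A2"
          using large_split_ex d by metis
        moreover have "A \<subseteq> B - {b}" using False less.prems(2) by blast
        ultimately have "large (fund \<alpha> b) (B - {b})"
          using less.hyps[OF cB fB, of A2] by blast
        then show ?thesis using LB by blast
      qed
    qed
  qed
qed

lemma large_split_in: "large \<gamma> A \<Longrightarrow> large \<beta> B \<Longrightarrow> (\<forall>x\<in>A. \<forall>y\<in>B. x < y) \<Longrightarrow> large (\<beta> @ \<gamma>) (A \<union> B)"
proof -
  assume a: "large \<gamma> A" "large \<beta> B" "\<forall>x\<in>A. \<forall>y\<in>B. x < y"
  have fA: "finite A" and fB: "finite B" using a large_fin by auto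
  define ys where "ys = sorted_list_of_set A"
  define zs where "zs = sorted_list_of_set B"
  have s: "sorted_wrt (<) (ys @ zs)" using a fA fB unfolding ys_def zs_def
    by (auto simp: sorted_wrt_append sorted_list_of_set.strict_sorted_key_list_of_set)
  have sAB: "sorted_list_of_set (A \<union> B) = ys @ zs" using sl_set[OF s] fA fB ys_def zs_def by simp
  have "foldl fund \<gamma> ys = []" using a ys_def by (simp add: large_def)
  then obtain ys1 ys2 where y: "ys = ys1 @ ys2" "foldl fund (\<beta> @ \<gamma>) ys1 = \<beta>"
    using split_in_aux by blast
  have s2: "sorted_wrt (<) (ys2 @ zs)" using s y by (simp add: sorted_wrt_append)
  have "large \<beta> (set (ys2 @ zs))"
    using large_mono[of "set (ys2 @ zs)" B \<beta>] a fB zs_def by simp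
  then have "foldl fund \<beta> (ys2 @ zs) = []" using sl_set[OF s2] by (simp add: large_def)
  then show ?thesis using sAB y fA fB by (simp add: large_def)
qed

lemma butlast_rep: "butlast (replicate d x) = replicate (d - 1) x"
  by (simp add: butlast_conv_take)

lemma fund_rep0: "fund (replicate d 0) x = replicate (d - 1) 0"
  unfolding fund_def butlast_rep by auto

lemma foldl_rep0: "foldl fund (replicate d 0) xs = replicate (d - length xs) 0"
  by (induction xs arbitrary: d) (auto simp: fund_rep0)

lemma large_rep0: "large (replicate d 0) S \<longleftrightarrow> finite S \<and> d \<le> card S"
  by (auto simp: large_def foldl_rep0)

lemma large_0: "large [0] S \<longleftrightarrow> finite S \<and> S \<noteq> {}"
  using large_rep0[of 1 S] by (auto simp: Suc_le_eq card_gt_0_iff)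

lemma fund_Suc: "fund [Suc k] a = replicate a k" by (simp add: fund_def)

lemma large_Suc: "finite (A::nat set) \<Longrightarrow> A \<noteq> {} \<Longrightarrow>
   large [Suc k] A \<longleftrightarrow> large (replicate (Min A) k) (A - {Min A})"
  using large_Min[of A "[Suc k]"] by (simp add: fund_Suc)

lemma large_insert_Suc: "finite B \<Longrightarrow> \<forall>y\<in>B. x < y \<Longrightarrow> large (replicate x k) B \<Longrightarrow> large [Suc k] (insert x B)"
  using large_insert[of B x "[Suc k]"] by (simp add: fund_Suc)

definition blk_chain :: "nat set list \<Rightarrow> bool" where
  "blk_chain Bs \<longleftrightarrow> sorted_wrt (\<lambda>A B. \<forall>x\<in>A. \<forall>y\<in>B. x < y) Bs"

lemma rep_Suc_app: "replicate (Suc m) k = replicate m k @ [k]"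
  by (metis replicate_Suc replicate_append_same)

lemma blocks_union: "blk_chain Bs \<Longrightarrow> (\<forall>B\<in>set Bs. large [k] B) \<Longrightarrow> m \<le> length Bs \<Longrightarrow>
   large (replicate m k) (\<Union>(set Bs))"
proof (induction Bs arbitrary: m)
  case Nil then show ?case by simp
next
  case (Cons B Bs)
  have fin: "finite (\<Union>(set (B # Bs)))" using Cons.prems(2) large_fin by auto
  show ?case
  proof (cases m)
    case 0 then show ?thesis using fin by simp
  next
    case (Suc m')
    have c: "blk_chain Bs" using Cons.prems(1) by (simp add: blk_chain_def)
    have "large (replicate m' k) (\<Union>(set Bs))"
      using Cons.IH[OF c, of m'] Cons.prems(2,3) Suc by simp
    moreover have "\<forall>x\<in>B. \<forall>y\<in>\<Union>(set Bs). x < y" using Cons.prems(1) by (auto simp: blk_chain_def)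
    ultimately have "large (replicate m' k @ [k]) (B \<union> \<Union>(set Bs))"
      using large_split_in[of "[k]" B "replicate m' k" "\<Union>(set Bs)"] Cons.prems(2) by simp
    moreover have "\<Union>(set (B # Bs)) = B \<union> \<Union>(set Bs)" by simp
    ultimately show ?thesis using Suc by (simp only: rep_Suc_app)
  qed
qed

lemma blocks_dec: "large (replicate m k) S \<Longrightarrow>
  \<exists>Bs. length Bs = m \<and> blk_chain Bs \<and> (\<forall>B\<in>set Bs. large [k] B \<and> B \<subseteq> S)"
proof (induction m arbitrary: S)
  case 0 then show ?case by (intro exI[of _ "[]"]) (simp add: blk_chain_def)
next
  case (Suc m)
  have "large (replicate m k @ [k]) S" using Suc.prems by (simp only: rep_Suc_app)
  then obtain A B where AB: "S = A \<union> B" "\<forall>x\<in>A. \<forall>y\<in>B. x < y" "large [k] A" "large (replicate m k) B"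
    using large_split_ex[of "replicate m k" "[k]" S] by blast
  from Suc.IH[OF AB(4)] obtain Bs where Bs: "length Bs = m" "blk_chain Bs" "\<forall>B'\<in>set Bs. large [k] B' \<and> B' \<subseteq> B"
    by blast
  have "\<forall>B'\<in>set Bs. \<forall>x\<in>A. \<forall>y\<in>B'. x < y" using Bs(3) AB(2) by blast
  then have "blk_chain (A # Bs)" using Bs(2) unfolding blk_chain_def by simp
  moreover have "\<forall>B'\<in>set (A # Bs). large [k] B' \<and> B' \<subseteq> S" using Bs(3) AB(1,3) by auto
  ultimately show ?case using Bs(1) by (intro exI[of _ "A # Bs"]) simp
qed

definition sp :: "nat set \<Rightarrow> bool" where
  "sp S \<longleftrightarrow> (\<forall>x\<in>S. \<forall>y\<in>S. x < y \<longrightarrow> 4 ^ x < y)"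

definition hom1 :: "(nat \<Rightarrow> bool) \<Rightarrow> nat set \<Rightarrow> bool" where
  "hom1 g C \<longleftrightarrow> (\<forall>x\<in>C. \<forall>y\<in>C. g x = g y)"

lemma sp_sub: "sp A \<Longrightarrow> B \<subseteq> A \<Longrightarrow> sp B"
  unfolding sp_def by blast

lemma hom1_const: "\<forall>x\<in>C. g x = c \<Longrightarrow> hom1 g C"
  unfolding hom1_def by simp

fun pairU :: "nat set list \<Rightarrow> nat set list" where
  "pairU (A # B # rest) = (A \<union> B) # pairU rest"
| "pairU _ = []"

lemma pairU_len: "length (pairU Bs) = length Bs div 2"
  by (induction Bs rule: pairU.induct) auto

lemma pairU_sub: "P \<in> set (pairU Bs) \<Longrightarrow> P \<subseteq> \<Union>(set Bs)"
  by (induction Bs rule: pairU.induct) auto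

lemma pairU_chain: "blk_chain Bs \<Longrightarrow> blk_chain (pairU Bs)"
proof (induction Bs rule: pairU.induct)
  case (1 A B rest)
  have c: "blk_chain rest" using 1(2) by (simp add: blk_chain_def)
  have "\<forall>P\<in>set (pairU rest). \<forall>x\<in>A \<union> B. \<forall>y\<in>P. x < y"
  proof (intro ballI)
    fix P x y assume "P \<in> set (pairU rest)" "x \<in> A \<union> B" "y \<in> P"
    then obtain R where "R \<in> set rest" "y \<in> R" using pairU_sub by blast
    then show "x < y" using 1(2) \<open>x \<in> A \<union> B\<close> by (auto simp: blk_chain_def)
  qed
  then show ?case using 1(1)[OF c] by (simp add: blk_chain_def)
qed (auto simp: blk_chain_def)

lemma pairU_large: "blk_chain Bs \<Longrightarrow> \<forall>B\<in>set Bs. large [k] B \<Longrightarrow> P \<in> set (pairU Bs) \<Longrightarrow> large (replicate 2 k) P"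
proof (induction Bs rule: pairU.induct)
  case (1 A B rest)
  show ?case
  proof (cases "P = A \<union> B")
    case True
    have "blk_chain [A, B]" using 1(2) by (simp add: blk_chain_def)
    then have "large (replicate 2 k) (\<Union>(set [A, B]))" using blocks_union[of "[A,B]" k 2] 1(3) by simp
    then show ?thesis using True by simp
  next
    case False
    then show ?thesis using 1 by (simp add: blk_chain_def)
  qed
qed auto

lemma chain_map_sub: "blk_chain Bs \<Longrightarrow> \<forall>B\<in>set Bs. f B \<subseteq> B \<Longrightarrow> blk_chain (map f Bs)"
  unfolding blk_chain_def sorted_wrt_map
  by (rule sorted_wrt_mono_rel[of _ "\<lambda>A B. \<forall>x\<in>A. \<forall>y\<in>B. x < y"]) blast+

lemma chain_filter: "blk_chain Bs \<Longrightarrow> blk_chain (filter P Bs)"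
  unfolding blk_chain_def by (simp add: sorted_wrt_filter)

lemma four_pow: "4 * e \<le> (4::nat) ^ e"
proof (induction e)
  case (Suc e)
  then show ?case by (cases e) auto
qed simp

lemma large_ne: "large [k] C \<Longrightarrow> C \<noteq> {}"
  by auto

lemma E2: "large (replicate 2 k) A \<Longrightarrow> sp A \<Longrightarrow> \<exists>C\<subseteq>A. large [k] C \<and> hom1 g C"
proof (induction k arbitrary: A)
  case 0
  then have "finite A" "A \<noteq> {}" using large_rep0[of 2 A] by auto
  then have "{Min A} \<subseteq> A" "large [0] {Min A}" by (auto simp: large_0)
  then show ?case by (intro exI[of _ "{Min A}"]) (auto simp: hom1_def)
next
  case (Suc k)
  have "large ([Suc k] @ [Suc k]) A" using Suc.prems(1) by (simp add: numeral_2_eq_2)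
  then obtain A1 A2 where AB: "A = A1 \<union> A2" "\<forall>x\<in>A1. \<forall>y\<in>A2. x < y" "large [Suc k] A1" "large [Suc k] A2"
    using large_split_ex[of "[Suc k]" "[Suc k]" A] by blast
  have fA1: "finite A1" and fA2: "finite A2" using AB large_fin by auto
  have ne1: "A1 \<noteq> {}" and ne2: "A2 \<noteq> {}" using AB(3,4) by auto
  define a where "a = Min A1"
  define b where "b = Min A2"
  have aA1: "a \<in> A1" using a_def fA1 ne1 by simp
  have bA2: "b \<in> A2" using b_def fA2 ne2 by simp
  have "large (replicate b k) (A2 - {b})" using large_Suc[OF fA2 ne2] AB(4) b_def by simp
  then obtain Bs where Bs: "length Bs = b" "blk_chain Bs" "\<forall>B\<in>set Bs. large [k] B \<and> B \<subseteq> A2 - {b}"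
    using blocks_dec by blast
  define Ps where "Ps = pairU Bs"
  have Ps_len: "length Ps = b div 2" using Ps_def Bs(1) pairU_len by simp
  have Ps_chain: "blk_chain Ps" using Ps_def Bs(2) pairU_chain by simp
  have Ps_sub: "\<forall>P\<in>set Ps. P \<subseteq> A2 - {b}" using Ps_def Bs(3) pairU_sub by blast
  have Ps_large: "\<forall>P\<in>set Ps. large (replicate 2 k) P" using Ps_def Bs pairU_large by blast
  have Ps_sp: "\<forall>P\<in>set Ps. sp P" using Ps_sub Suc.prems(2) AB(1) sp_sub by (meson Diff_subset Un_upper2 subset_trans)
  define mo where "mo P = (SOME C. C \<subseteq> P \<and> large [k] C \<and> hom1 g C)" for P
  have mo: "mo P \<subseteq> P \<and> large [k] (mo P) \<and> hom1 g (mo P)" if "P \<in> set Ps" for P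
  proof -
    have "\<exists>C. C \<subseteq> P \<and> large [k] C \<and> hom1 g C" using Suc.IH[of P] Ps_large Ps_sp that by blast
    then show ?thesis unfolding mo_def by (rule someI_ex)
  qed
  define Ms where "Ms = map mo Ps"
  have Ms_P: "\<exists>P\<in>set Ps. M = mo P" if "M \<in> set Ms" for M
    using that unfolding Ms_def by (simp add: image_iff)
  have Ms_chain: "blk_chain Ms" unfolding Ms_def
    by (rule chain_map_sub[OF Ps_chain]) (use mo in blast)
  have Ms_len: "length Ms = b div 2" using Ms_def Ps_len by simp
  have Ms_all: "large [k] M \<and> M \<subseteq> A2 \<and> hom1 g M" if MM: "M \<in> set Ms" for M
  proof -
    obtain P where P: "P \<in> set Ps" "M = mo P" using Ms_P[OF MM] by blast
    then show ?thesis using mo[OF P(1)] Ps_sub by blast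
  qed
  have Ms_large: "\<forall>M\<in>set Ms. large [k] M" using Ms_all by blast
  have Ms_sub: "\<forall>M\<in>set Ms. M \<subseteq> A2" using Ms_all by blast
  have Ms_col: "\<forall>M\<in>set Ms. \<forall>x\<in>M. g x = g (Min M)"
  proof (intro ballI)
    fix M x assume M: "M \<in> set Ms" and x: "x \<in> M"
    have h: "hom1 g M" using Ms_all[OF M] by blast
    have "finite M" "M \<noteq> {}" using Ms_all[OF M] large_fin by auto
    then have "Min M \<in> M" by simp
    then show "g x = g (Min M)" using x h unfolding hom1_def by blast
  qed
  define \<gamma> where "\<gamma> = g a"
  define Ls where "Ls = filter (\<lambda>M. g (Min M) = \<gamma>) Ms"
  define Rs where "Rs = filter (\<lambda>M. \<not> g (Min M) = \<gamma>) Ms"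
  have LR_len: "length Ls + length Rs = b div 2"
    using sum_length_filter_compl[of "\<lambda>M. g (Min M) = \<gamma>" Ms] Ms_len Ls_def Rs_def by simp
  have above: "\<forall>x\<in>A1. \<forall>y\<in>\<Union>(set Ms). x < y" using Ms_sub AB(2) by blast
  show ?case
  proof (cases "a \<le> length Ls")
    case True
    define C where "C = insert a (\<Union>(set Ls))"
    have "\<forall>M\<in>set Ls. finite M" using Ls_def Ms_large large_fin by auto
    then have fL: "finite (\<Union>(set Ls))" by simp
    have "large (replicate a k) (\<Union>(set Ls))"
      using blocks_union[of Ls k a] chain_filter[OF Ms_chain] Ms_large True Ls_def by auto
    moreover have "\<forall>y\<in>\<Union>(set Ls). a < y" using above aA1 Ls_def by auto
    ultimately have "large [Suc k] C" using large_insert_Suc fL C_def by blast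
    moreover have "C \<subseteq> A" using C_def aA1 Ms_sub Ls_def AB(1) by auto
    moreover have "hom1 g C"
    proof (rule hom1_const[where c = \<gamma>], intro ballI)
      fix x assume "x \<in> C"
      then show "g x = \<gamma>" using C_def \<gamma>_def Ls_def Ms_col by auto
    qed
    ultimately show ?thesis by blast
  next
    case False
    show ?thesis
    proof (cases "\<forall>x\<in>A1. g x = \<gamma>")
      case True
      then have "hom1 g A1" by (rule hom1_const)
      then show ?thesis using AB by blast
    next
      case False
      then obtain e where e: "e \<in> A1" "g e \<noteq> \<gamma>" by blast
      have "a \<le> e" using a_def e fA1 by simp
      have "e < b" using AB(2) e bA2 by blast
      then have "4 ^ e < b" using Suc.prems(2) e bA2 AB(1) unfolding sp_def by blast
      then have "4 * e < b" using four_pow[of e] by linarith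
      then have "e \<le> length Rs" using LR_len \<open>a \<le> e\<close> \<open>\<not> a \<le> length Ls\<close> by linarith
      define C where "C = insert e (\<Union>(set Rs))"
      have "\<forall>M\<in>set Rs. finite M" using Rs_def Ms_large large_fin by auto
      then have fR: "finite (\<Union>(set Rs))" by simp
      have "large (replicate e k) (\<Union>(set Rs))"
        using blocks_union[of Rs k e] chain_filter[OF Ms_chain] Ms_large \<open>e \<le> length Rs\<close> Rs_def by auto
      moreover have "\<forall>y\<in>\<Union>(set Rs). e < y" using above e(1) Rs_def by auto
      ultimately have "large [Suc k] C" using large_insert_Suc fR C_def by blast
      moreover have "C \<subseteq> A" using C_def e(1) Ms_sub Rs_def AB(1) by auto
      moreover have "hom1 g C"
      proof (rule hom1_const[where c = "\<not> \<gamma>"], intro ballI)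
        fix x assume "x \<in> C"
        then show "g x = (\<not> \<gamma>)" using C_def e(2) Rs_def Ms_col by auto
      qed
      ultimately show ?thesis by blast
    qed
  qed
qed

lemma mono_family: "blk_chain Ps \<Longrightarrow> \<forall>P\<in>set Ps. large (replicate 2 k) P \<and> sp P \<Longrightarrow>
  \<exists>Ms. length Ms = length Ps \<and> blk_chain Ms \<and> (\<forall>M\<in>set Ms. large [k] M \<and> hom1 g M \<and> (\<exists>P\<in>set Ps. M \<subseteq> P))"
proof (induction Ps)
  case Nil then show ?case by (intro exI[of _ "[]"]) (simp add: blk_chain_def)
next
  case (Cons P Ps)
  have c: "blk_chain Ps" using Cons.prems(1) by (simp add: blk_chain_def)
  obtain Ms where Ms: "length Ms = length Ps" "blk_chain Ms" "\<forall>M\<in>set Ms. large [k] M \<and> hom1 g M \<and> (\<exists>P\<in>set Ps. M \<subseteq> P)"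
    using Cons.IH[OF c] Cons.prems(2) by auto
  obtain M where M: "M \<subseteq> P" "large [k] M" "hom1 g M" using E2[of k P g] Cons.prems(2) by auto
  have lt: "\<forall>P'\<in>set Ps. \<forall>x\<in>P. \<forall>y\<in>P'. x < y" using Cons.prems(1) by (simp add: blk_chain_def)
  have "\<forall>M'\<in>set Ms. \<forall>x\<in>M. \<forall>y\<in>M'. x < y"
  proof (intro ballI)
    fix M' x y assume "M' \<in> set Ms" "x \<in> M" "y \<in> M'"
    then obtain P' where "P' \<in> set Ps" "M' \<subseteq> P'" using Ms(3) by blast
    then show "x < y" using lt M(1) \<open>x \<in> M\<close> \<open>y \<in> M'\<close> by blast
  qed
  then have "blk_chain (M # Ms)" using Ms(2) by (simp add: blk_chain_def)
  then show ?case using Ms M by (intro exI[of _ "M # Ms"]) auto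
qed

lemma MMB: "blk_chain Bs \<Longrightarrow> \<forall>B\<in>set Bs. large [k] B \<Longrightarrow> 4 ^ length G \<le> length Bs \<Longrightarrow>
  sp (\<Union>(set Bs)) \<Longrightarrow> \<exists>C \<subseteq> \<Union>(set Bs). large [k] C \<and> (\<forall>g\<in>set G. hom1 g C)"
proof (induction G arbitrary: Bs)
  case Nil
  then obtain B where "B \<in> set Bs" by (cases Bs) auto
  then show ?case using Nil by (intro exI[of _ B]) auto
next
  case (Cons g G)
  define Ps where "Ps = pairU Bs"
  have Ps_len: "length Ps = length Bs div 2" using Ps_def pairU_len by simp
  have Ps_chain: "blk_chain Ps" using Ps_def Cons.prems(1) pairU_chain by simp
  have Ps_sub: "\<forall>P\<in>set Ps. P \<subseteq> \<Union>(set Bs)" using Ps_def pairU_sub by blast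
  have Ps_ok: "\<forall>P\<in>set Ps. large (replicate 2 k) P \<and> sp P"
  proof
    fix P assume P: "P \<in> set Ps"
    have "large (replicate 2 k) P" using pairU_large[OF Cons.prems(1,2)] P Ps_def by blast
    moreover have "sp P" using sp_sub[OF Cons.prems(4)] Ps_sub P by blast
    ultimately show "large (replicate 2 k) P \<and> sp P" by blast
  qed
  obtain Ms where Ms: "length Ms = length Ps" "blk_chain Ms" "\<forall>M\<in>set Ms. large [k] M \<and> hom1 g M \<and> (\<exists>P\<in>set Ps. M \<subseteq> P)"
    using mono_family[OF Ps_chain Ps_ok] by blast
  have Ms_sub: "\<forall>M\<in>set Ms. M \<subseteq> \<Union>(set Bs)" using Ms(3) Ps_sub by blast
  have Ms_col: "\<forall>M\<in>set Ms. \<forall>x\<in>M. g x = g (Min M)"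
  proof (intro ballI)
    fix M x assume M: "M \<in> set Ms" and x: "x \<in> M"
    have h: "hom1 g M" using Ms(3) M by blast
    have "finite M" "M \<noteq> {}" using Ms(3) M large_fin by auto
    then have "Min M \<in> M" by simp
    then show "g x = g (Min M)" using x h unfolding hom1_def by blast
  qed
  define Ls where "Ls = filter (\<lambda>M. g (Min M)) Ms"
  define Rs where "Rs = filter (\<lambda>M. \<not> g (Min M)) Ms"
  have LR_len: "length Ls + length Rs = length Bs div 2"
    using sum_length_filter_compl[of "\<lambda>M. g (Min M)" Ms] Ms(1) Ps_len Ls_def Rs_def by simp
  have "4 * 4 ^ length G \<le> length Bs" using Cons.prems(3) by simp
  then have "2 * 4 ^ length G \<le> length Ls + length Rs" using LR_len by linarith
  then obtain Qs c where Qs: "blk_chain Qs" "set Qs \<subseteq> set Ms" "4 ^ length G \<le> length Qs"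
      "\<forall>M\<in>set Qs. \<forall>x\<in>M. g x = c"
  proof (cases "4 ^ length G \<le> length Ls")
    case True
    have "\<forall>M\<in>set Ls. \<forall>x\<in>M. g x = True" using Ls_def Ms_col by auto
    moreover have "set Ls \<subseteq> set Ms" using Ls_def by simp
    moreover have "blk_chain Ls" using chain_filter[OF Ms(2)] Ls_def by simp
    ultimately show ?thesis using that[of Ls True] True by blast
  next
    case False
    then have "4 ^ length G \<le> length Rs" using \<open>2 * 4 ^ length G \<le> length Ls + length Rs\<close> by linarith
    moreover have "\<forall>M\<in>set Rs. \<forall>x\<in>M. g x = False" using Rs_def Ms_col by auto
    moreover have "set Rs \<subseteq> set Ms" using Rs_def by simp
    moreover have "blk_chain Rs" using chain_filter[OF Ms(2)] Rs_def by simp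
    ultimately show ?thesis using that[of Rs False] by blast
  qed
  have Qs_sub: "\<Union>(set Qs) \<subseteq> \<Union>(set Bs)" using Qs(2) Ms_sub by blast
  have "\<forall>B\<in>set Qs. large [k] B" using Qs(2) Ms(3) by blast
  moreover have "sp (\<Union>(set Qs))" using Qs_sub Cons.prems(4) sp_sub by blast
  ultimately obtain C where C: "C \<subseteq> \<Union>(set Qs)" "large [k] C" "\<forall>g\<in>set G. hom1 g C"
    using Cons.IH[OF Qs(1)] Qs(3) by blast
  have "hom1 g C" using C(1) Qs(4) by (intro hom1_const[where c = c]) blast
  then show ?case using C Qs_sub by (intro exI[of _ C]) auto
qed

lemma MM: "large [Suc k] Y \<Longrightarrow> sp Y \<Longrightarrow> 4 ^ length G \<le> Min Y \<Longrightarrow>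
  \<exists>C\<subseteq>Y. large [k] C \<and> (\<forall>g\<in>set G. hom1 g C)"
proof -
  assume a: "large [Suc k] Y" "sp Y" "4 ^ length G \<le> Min Y"
  have f: "finite Y" and ne: "Y \<noteq> {}" using a(1) large_fin by auto
  have "large (replicate (Min Y) k) (Y - {Min Y})" using large_Suc[OF f ne] a(1) by simp
  then obtain Bs where Bs: "length Bs = Min Y" "blk_chain Bs" "\<forall>B\<in>set Bs. large [k] B \<and> B \<subseteq> Y - {Min Y}"
    using blocks_dec by blast
  have sub: "\<Union>(set Bs) \<subseteq> Y" using Bs(3) by blast
  then have "sp (\<Union>(set Bs))" using a(2) sp_sub by blast
  then obtain C where "C \<subseteq> \<Union>(set Bs)" "large [k] C" "\<forall>g\<in>set G. hom1 g C"
    using MMB[OF Bs(2), of k G] Bs a(3) by auto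
  then show ?thesis using sub by blast
qed

lemma count_below: "exp_sparse X \<Longrightarrow> t \<in> X \<Longrightarrow> 4 ^ card {x\<in>X. x < t} \<le> t"
proof -
  assume a: "exp_sparse X" "t \<in> X"
  have ge3: "\<forall>x\<in>X. 3 \<le> x" and spa: "\<forall>x\<in>X. \<forall>y\<in>X. x < y \<longrightarrow> 4 ^ x < y"
    using a(1) unfolding exp_sparse_def by blast+
  define S where "S = {x\<in>X. x < t}"
  have fS: "finite S" unfolding S_def by (rule finite_subset[of _ "{..<t}"]) auto
  show ?thesis
  proof (cases "S = {}")
    case True
    have "3 \<le> t" using ge3 a(2) by blast
    then show ?thesis unfolding S_def[symmetric] using True by simp
  next
    case False
    define m where "m = Max S"
    have mS: "m \<in> S" using fS False m_def by simp
    then have mX: "m \<in> X" "m < t" unfolding S_def by blast+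
    then have m4: "4 ^ m < t" using spa a(2) by blast
    have "S \<subseteq> {1..m}"
    proof
      fix x assume x: "x \<in> S"
      then have "x \<le> m" using fS m_def by simp
      moreover have "3 \<le> x" using x ge3 unfolding S_def by blast
      ultimately show "x \<in> {1..m}" by simp
    qed
    then have "card S \<le> m" using card_mono[of "{1..m}" S] by simp
    then have p: "(4::nat) ^ card S \<le> 4 ^ m" by (simp add: power_increasing)
    show ?thesis unfolding S_def[symmetric] using p m4 by (meson le_less_trans less_imp_le)
  qed
qed

lemma sp_of: "exp_sparse X \<Longrightarrow> sp X"
  unfolding exp_sparse_def sp_def by blast

lemma chain_nth: "blk_chain Bs \<Longrightarrow> i < j \<Longrightarrow> j < length Bs \<Longrightarrow> x \<in> Bs ! i \<Longrightarrow> y \<in> Bs ! j \<Longrightarrow> x < y"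
proof -
  assume a: "blk_chain Bs" "i < j" "j < length Bs" "x \<in> Bs ! i" "y \<in> Bs ! j"
  have "sorted_wrt (\<lambda>A B. \<forall>x\<in>A. \<forall>y\<in>B. x < y) Bs" using a(1) unfolding blk_chain_def .
  from sorted_wrt_nth_less[OF this a(2,3)] show "x < y" using a(4,5) by blast
qed

theorem lemma2p6:
  fixes X :: "nat set" and n d :: nat
  assumes "finite X"
    and "large (omega_pow (n + 3)) X"
    and "exp_sparse X"
    and "d \<le> Min X"
  shows "\<forall>P :: nat \<Rightarrow> nat \<Rightarrow> bool. \<exists>F. grouping (omega_pow n) (ord_of_nat d) X P F"
proof
  fix P :: "nat \<Rightarrow> nat \<Rightarrow> bool"
  have eq3: "n + 3 = Suc (Suc (Suc n))" by arith
  have LX: "large [Suc (Suc (Suc n))] X" using assms(2) unfolding omega_pow_def eq3 .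
  have spX: "sp X" using assms(3) sp_of by blast
  have neX: "X \<noteq> {}" using LX by auto
  define x0 where "x0 = Min X"
  have x0X: "x0 \<in> X" using x0_def neX assms(1) by simp
  have "large (replicate x0 (Suc (Suc n))) (X - {x0})" using large_Suc[OF assms(1) neX] LX x0_def by simp
  then obtain Ds where Ds: "length Ds = x0" "blk_chain Ds" "\<forall>B\<in>set Ds. large [Suc (Suc n)] B \<and> B \<subseteq> X - {x0}"
    using blocks_dec by blast
  have Dsi: "large [Suc (Suc n)] (Ds ! i) \<and> Ds ! i \<subseteq> X - {x0}" if "i < x0" for i
    using Ds that by (metis nth_mem)
  have Eex: "\<exists>E. E \<subseteq> Ds ! i \<and> large [Suc n] E \<and> (\<forall>x\<in>X. x < Min (Ds ! i) \<longrightarrow> hom1 (P x) E)"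
    if i: "i < x0" for i
  proof -
    define D where "D = Ds ! i"
    have LD: "large [Suc (Suc n)] D" and DX: "D \<subseteq> X - {x0}" using Dsi[OF i] D_def by auto
    have fD: "finite D" and neD: "D \<noteq> {}" using LD large_fin by auto
    have MD: "Min D \<in> X" using fD neD DX Min_in by blast
    define G where "G = map P (sorted_list_of_set {x\<in>X. x < Min D})"
    have fin: "finite {x\<in>X. x < Min D}" using assms(1) by simp
    have "length G = card {x\<in>X. x < Min D}" using G_def by simp
    then have "4 ^ length G \<le> Min D" using count_below[OF assms(3) MD] by simp
    moreover have "sp D" using spX DX sp_sub by blast
    ultimately obtain C where C: "C \<subseteq> D" "large [Suc n] C" "\<forall>g\<in>set G. hom1 g C"
      using MM[OF LD] by blast
    have "\<forall>x\<in>X. x < Min D \<longrightarrow> hom1 (P x) C"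
    proof (intro ballI impI)
      fix x assume "x \<in> X" "x < Min D"
      then have "P x \<in> set G" using G_def fin by simp
      then show "hom1 (P x) C" using C(3) by blast
    qed
    then show ?thesis using C D_def by blast
  qed
  define E where "E i = (SOME E. E \<subseteq> Ds ! i \<and> large [Suc n] E \<and> (\<forall>x\<in>X. x < Min (Ds ! i) \<longrightarrow> hom1 (P x) E))" for i
  have E: "E i \<subseteq> Ds ! i \<and> large [Suc n] (E i) \<and> (\<forall>x\<in>X. x < Min (Ds ! i) \<longrightarrow> hom1 (P x) (E i))"
    if "i < x0" for i
    unfolding E_def by (rule someI_ex[OF Eex[OF that]])
  have Efacts: "E i \<subseteq> X - {x0} \<and> finite (E i) \<and> E i \<noteq> {} \<and> Min (E i) \<in> E i" if "i < x0" for i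
  proof -
    have "E i \<subseteq> X - {x0}" using E[OF that] Dsi[OF that] by blast
    moreover have "finite (E i)" "E i \<noteq> {}" using E[OF that] large_fin by auto
    ultimately show ?thesis by simp
  qed
  have Fex: "\<exists>F. F \<subseteq> E i \<and> large [n] F \<and> (\<forall>j. i < j \<and> j < d \<longrightarrow> hom1 (\<lambda>x. P x (Min (E j))) F)"
    if i: "i < d" for i
  proof -
    have i0: "i < x0" using i assms(4) x0_def by simp
    define G where "G = map (\<lambda>j x. P x (Min (E j))) [Suc i..<d]"
    have mE: "Min (E i) \<in> X" "Min (E i) \<noteq> x0" using Efacts[OF i0] by auto
    have "x0 \<le> Min (E i)" using mE(1) x0_def assms(1) by simp
    then have "x0 < Min (E i)" using mE(2) by simp
    then have m4: "4 ^ x0 < Min (E i)" using spX mE(1) x0X unfolding sp_def by blast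
    have "(4::nat) ^ length G \<le> 4 ^ x0"
    proof -
      have "length G \<le> x0" using G_def assms(4) x0_def by simp
      then show ?thesis by (simp add: power_increasing)
    qed
    then have le: "4 ^ length G \<le> Min (E i)" using m4 by linarith
    have spE: "sp (E i)" using spX Efacts[OF i0] sp_sub by blast
    have LE: "large [Suc n] (E i)" using E[OF i0] by blast
    obtain C where C: "C \<subseteq> E i" "large [n] C" "\<forall>g\<in>set G. hom1 g C"
      using MM[OF LE spE le] by blast
    have "\<forall>j. i < j \<and> j < d \<longrightarrow> hom1 (\<lambda>x. P x (Min (E j))) C"
    proof (intro allI impI)
      fix j assume "i < j \<and> j < d"
      then have "(\<lambda>x. P x (Min (E j))) \<in> set G" using G_def by auto
      then show "hom1 (\<lambda>x. P x (Min (E j))) C" using C(3) by blast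
    qed
    then show ?thesis using C by blast
  qed
  define F where "F i = (SOME F. F \<subseteq> E i \<and> large [n] F \<and> (\<forall>j. i < j \<and> j < d \<longrightarrow> hom1 (\<lambda>x. P x (Min (E j))) F))" for i
  have Fp: "F i \<subseteq> E i \<and> large [n] (F i) \<and> (\<forall>j. i < j \<and> j < d \<longrightarrow> hom1 (\<lambda>x. P x (Min (E j))) (F i))"
    if "i < d" for i
    unfolding F_def by (rule someI_ex[OF Fex[OF that]])
  have dx: "d \<le> x0" using assms(4) x0_def by simp
  have FX: "F i \<subseteq> X" "finite (F i)" "F i \<noteq> {}" "F i \<subseteq> Ds ! i" if "i < d" for i
  proof -
    have i0: "i < x0" using that dx by simp
    show "F i \<subseteq> Ds ! i" using Fp[OF that] E[OF i0] by blast
    then show "F i \<subseteq> X" using Dsi[OF i0] by blast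
    show "finite (F i)" "F i \<noteq> {}" using Fp[OF that] large_fin by auto
  qed
  have ord: "x < y" if "i < j" "j < d" "x \<in> Ds ! i" "y \<in> Ds ! j" for i j x y
    using chain_nth[OF Ds(2) that(1) _ that(3,4)] that(2) dx Ds(1) by simp
  have MaxMin: "Max (F i) < Min (F j)" if "i < j" "j < d" for i j
  proof -
    have i: "i < d" using that by simp
    have "Max (F i) \<in> F i" using FX[OF i] by simp
    then have a: "Max (F i) \<in> Ds ! i" using FX(4)[OF i] by blast
    have "Min (F j) \<in> F j" using FX[OF that(2)] by simp
    then have b: "Min (F j) \<in> Ds ! j" using FX(4)[OF that(2)] by blast
    show ?thesis using ord[OF that a b] .
  qed
  define Fl where "Fl = map F [0..<d]"
  have Fl: "length Fl = d" "\<And>i. i < d \<Longrightarrow> Fl ! i = F i" using Fl_def by auto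
  have MM_lt: "Max (F i) < Max (F j)" if "i < j" "j < d" for i j
  proof -
    have "Min (F j) \<le> Max (F j)" using FX[of j] that by simp
    then show ?thesis using MaxMin[OF that] by simp
  qed
  have setM: "{Max (Fl ! i) | i. i < length Fl} = (\<lambda>i. Max (F i)) ` {..<d}"
  proof (rule set_eqI, rule iffI)
    fix z assume "z \<in> {Max (Fl ! i) | i. i < length Fl}"
    then obtain i where "z = Max (Fl ! i)" "i < length Fl" by blast
    then show "z \<in> (\<lambda>i. Max (F i)) ` {..<d}" using Fl by auto
  next
    fix z assume "z \<in> (\<lambda>i. Max (F i)) ` {..<d}"
    then obtain i where "i < d" "z = Max (F i)" by blast
    then have "z = Max (Fl ! i) \<and> i < length Fl" using Fl by simp
    then show "z \<in> {Max (Fl ! i) | i. i < length Fl}" by blast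
  qed
  have inj: "inj_on (\<lambda>i. Max (F i)) {..<d}"
  proof (rule inj_onI)
    fix i j assume "i \<in> {..<d}" "j \<in> {..<d}" "Max (F i) = Max (F j)"
    then show "i = j" using MM_lt by (metis lessThan_iff linorder_neqE_nat less_irrefl)
  qed
  have card: "card {Max (Fl ! i) | i. i < length Fl} = d"
    using setM card_image[OF inj] by simp
  have g5: "P x y = P x' y'" if ij: "i < j" "j < d" and xs: "x \<in> F i" "x' \<in> F i" and ys: "y \<in> F j" "y' \<in> F j"
    for i j x x' y y'
  proof -
    have i: "i < d" using ij by simp
    have j0: "j < x0" using ij dx by simp
    have mEj: "Min (E j) \<in> E j" using Efacts[OF j0] by blast
    have yE: "y \<in> E j" "y' \<in> E j" using ys Fp[OF ij(2)] by auto
    have "Min (Ds ! j) \<in> Ds ! j" using Dsi[OF j0] large_fin by (metis Min_in large_ne)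
    then have xl: "x < Min (Ds ! j)" "x' < Min (Ds ! j)"
      using ord[OF ij] xs FX[OF i] by auto
    have xX: "x \<in> X" "x' \<in> X" using xs FX[OF i] by auto
    have h1: "hom1 (P x) (E j)" "hom1 (P x') (E j)" using E[OF j0] xl xX by auto
    have h2: "hom1 (\<lambda>x. P x (Min (E j))) (F i)" using Fp[OF i] ij by blast
    have "P x y = P x (Min (E j))" using h1(1) yE mEj unfolding hom1_def by blast
    also have "\<dots> = P x' (Min (E j))" using h2 xs unfolding hom1_def by blast
    also have "\<dots> = P x' y'" using h1(2) yE mEj unfolding hom1_def by blast
    finally show ?thesis .
  qed
  have c1: "\<forall>i<length Fl. Fl ! i \<subseteq> X \<and> finite (Fl ! i)"
  proof (intro allI impI)
    fix i assume "i < length Fl"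
    then have i: "i < d" using Fl(1) by simp
    show "Fl ! i \<subseteq> X \<and> finite (Fl ! i)" using FX(1,2)[OF i] Fl(2)[OF i] by simp
  qed
  have c2: "\<forall>i j. i < j \<and> j < length Fl \<longrightarrow> Max (Fl ! i) < Min (Fl ! j)"
  proof (intro allI impI)
    fix i j assume a: "i < j \<and> j < length Fl"
    then have ij: "i < j" "j < d" using Fl(1) by auto
    then have "i < d" by simp
    show "Max (Fl ! i) < Min (Fl ! j)" using MaxMin[OF ij] Fl(2)[OF ij(2)] Fl(2)[OF \<open>i < d\<close>] by simp
  qed
  have c3: "\<forall>i<length Fl. large [n] (Fl ! i)"
  proof (intro allI impI)
    fix i assume "i < length Fl"
    then have i: "i < d" using Fl(1) by simp
    show "large [n] (Fl ! i)" using Fp[OF i] Fl(2)[OF i] by simp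
  qed
  have c4: "large (replicate d 0) {Max (Fl ! i) | i. i < length Fl}"
  proof -
    have "finite {Max (Fl ! i) | i. i < length Fl}" unfolding setM by simp
    then show ?thesis unfolding large_rep0 using card by simp
  qed
  have c5: "\<forall>i j. i < j \<and> j < length Fl \<longrightarrow>
        (\<forall>x\<in>Fl ! i. \<forall>x'\<in>Fl ! i. \<forall>y\<in>Fl ! j. \<forall>y'\<in>Fl ! j. P x y = P x' y')"
  proof (intro allI impI ballI)
    fix i j x x' y y' assume a: "i < j \<and> j < length Fl" "x \<in> Fl ! i" "x' \<in> Fl ! i" "y \<in> Fl ! j" "y' \<in> Fl ! j"
    then have ij: "i < j" "j < d" using Fl(1) by auto
    then have "i < d" by simp
    have "x \<in> F i" "x' \<in> F i" using a(2,3) Fl(2)[OF \<open>i < d\<close>] by auto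
    moreover have "y \<in> F j" "y' \<in> F j" using a(4,5) Fl(2)[OF ij(2)] by auto
    ultimately show "P x y = P x' y'" using g5[OF ij] by blast
  qed
  have "grouping [n] (replicate d 0) X P Fl"
    unfolding grouping_def using c1 c2 c3 c4 c5 by blast
  then show "\<exists>F. grouping (omega_pow n) (ord_of_nat d) X P F"
    unfolding omega_pow_def ord_of_nat_def by blast
qed

end
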